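(* Let $\mathcal{T}=\mathcal{T}_1\cup\dots\cup\mathcal{T}_d$ be a compact interval partitioned into pairwise disjoint subintervals, $\boldsymbol{\phi}=(\phi_1,\dots,\phi_m)'$ linearly independent functions in $L^2(\mathcal{T})$, $\mathbf{W}=\int_{\mathcal{T}}\boldsymbol{\phi}\boldsymbol{\phi}'$, $\mathbf{W}_{\mathcal{T}_a}=\int_{\mathcal{T}_a}\boldsymbol{\phi}\boldsymbol{\phi}'$. Let $\mathbf{X}(t)=\mathbf{A}'\boldsymbol{\phi}(t)$ be a rank-$M$ ($M=mp$) $p$-variate process with separable covariance $\mathbf{K}(s,t)=\boldsymbol{\Sigma}^{\mathrm{row}}\kappa(s,t)$, random coefficient matrix $\mathbf{A}=(\mathbf{a}_1,\dots,\mathbf{a}_p)\in\mathbb{R}^{m\times p}$, mean $\boldsymbol{\mu}(t)=\mathbf{M}_{\mathbf{A}}'\boldsymbol{\phi}(t)$ with $\mathbf{M}_{\mathbf{A}}=(\mathbf{m}_{\mathbf{A},1},\dots,\mathbf{m}_{\mathbf{A},p})=E\mathbf{A}$, and $\kappa(s,t)=\boldsymbol{\phi}'(s)\boldsymbol{\Sigma}^{\mathrm{col}}\boldsymbol{\phi}(t)$ with $\boldsymbol{\Sigma}^{\mathrm{col}}$ positive definite. Let $(\lambda_j^{\mathrm{row}},\mathbf{v}_j^{\mathrm{row}})$, $j=1,\dots,p$, be the eigenpairs of $\boldsymbol{\Sigma}^{\mathrm{row}}$ and $v^{\mathrm{row}}_{j,k}=\mathbf{e}_k'\mathbf{v}^{\mathrm{row}}_j$.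 Then $$\Theta_{k,\mathcal{T}_a}(\mathbf{X},\boldsymbol{\mu};\mathbf{K},M)=\sum_{j=1}^p\frac{1}{\lambda_j^{\mathrm{row}}}v^{\mathrm{row}}_{j,k}(\mathbf{a}_k-\mathbf{m}_{\mathbf{A},k})'\mathbf{W}_{\mathcal{T}_a}\mathbf{W}^{-1}(\boldsymbol{\Sigma}^{\mathrm{col}})^{-1}(\mathbf{A}-\mathbf{M}_{\mathbf{A}})'\mathbf{v}^{\mathrm{row}}_j.$$
   Context: $\boldsymbol{\Sigma}^{\mathrm{row}}$ is $p\times p$ symmetric positive definite. The covariance operator $\mathcal{C}\mathbf{x}(s)=\int\mathbf{K}(s,t)\mathbf{x}(t)dt$ on $L^2(\mathcal{T})^p$ (inner product $\langle\mathbf{x},\mathbf{y}\rangle=\sum_j\int_{\mathcal{T}}x_jy_j$) has orthonormal eigenfunctions $\boldsymbol{\psi}_i$ and nonincreasing eigenvalues $\pi_i$; $\mathrm{fMMD}^2(\mathbf{Y},\boldsymbol{\mu};\mathbf{K},M)=\sum_{i=1}^M\pi_i^{-1}\langle\mathbf{Y}-\boldsymbol{\mu},\boldsymbol{\psi}_i\rangle^2$. For $Q\subseteq\{1,\dots,p\}\times\{1,\dots,d\}$, $\hat X^Q_j(t)=X_j(t)$ if $t\in\mathcal{T}_b$ with $(j,b)\in Q$ and $\hat X^Q_j(t)=\mu_j(t)$ otherwise; $\Theta_{k,\mathcal{T}_a}(\mathbf{X},\boldsymbol{\mu};\mathbf{K},M)=\sum_{Q\not\ni(k,a)}\frac{|Q|!(pd-|Q|-1)!}{(pd)!}[v(Q\cup\{(k,a)\})-v(Q)]$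 with $v(Q)=\mathrm{fMMD}^2(\hat{\mathbf{X}}^Q,\boldsymbol{\mu};\mathbf{K},M)$, the Shapley value of cell $(k,a)$. *)

theory Defs
  imports "HOL-Analysis.Analysis"
begin

definition L2_on :: "real set \<Rightarrow> (real \<Rightarrow> real) \<Rightarrow> bool" where
  "L2_on S f \<longleftrightarrow> set_borel_measurable lborel S f \<and> set_integrable lborel S (\<lambda>t. (f t)\<^sup>2)"

definition L2p_on :: "real set \<Rightarrow> (real \<Rightarrow> real ^ 'p) \<Rightarrow> bool" where
  "L2p_on S x \<longleftrightarrow> (\<forall>j. L2_on S (\<lambda>t. x t $ j))"

definition ip :: "real set \<Rightarrow> (real \<Rightarrow> real ^ 'p) \<Rightarrow> (real \<Rightarrow> real ^ 'p) \<Rightarrow> real" where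
  "ip S x y = (\<Sum>j\<in>UNIV. LINT t:S|lborel. x t $ j * y t $ j)"

definition gram :: "real set \<Rightarrow> (real \<Rightarrow> real ^ 'm) \<Rightarrow> real ^ 'm ^ 'm" where
  "gram S \<phi> = (\<chi> i j. LINT t:S|lborel. \<phi> t $ i * \<phi> t $ j)"

definition pos_def :: "real ^ 'n ^ 'n \<Rightarrow> bool" where
  "pos_def S \<longleftrightarrow> transpose S = S \<and> (\<forall>x. x \<noteq> 0 \<longrightarrow> x \<bullet> (S *v x) > 0)"

definition cov_op :: "real set \<Rightarrow> (real \<Rightarrow> real \<Rightarrow> real ^ 'p ^ 'p) \<Rightarrow> (real \<Rightarrow> real ^ 'p) \<Rightarrow> real \<Rightarrow> real ^ 'p" where
  "cov_op S K x = (\<lambda>s. \<chi> i. \<Sum>j\<in>UNIV. LINT t:S|lborel. K s t $ i $ j * x t $ j)"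

text \<open>fMMD^2(Y, mu; K, M) = sum_{i<M} pi_i^{-1} <Y - mu, psi_i>^2, where (psi_i, pi_i)
  (0-based index) is the orthonormal eigensystem of the covariance operator of K
  (hypotheses on psi, pi are stated in the theorem).\<close>
definition fMMD2 :: "real set \<Rightarrow> (nat \<Rightarrow> real \<Rightarrow> real ^ 'p) \<Rightarrow> (nat \<Rightarrow> real) \<Rightarrow> nat
    \<Rightarrow> (real \<Rightarrow> real ^ 'p) \<Rightarrow> (real \<Rightarrow> real ^ 'p) \<Rightarrow> real" where
  "fMMD2 S \<psi> \<pi> M Y \<mu> = (\<Sum>i<M. (ip S (\<lambda>t. Y t - \<mu> t) (\<psi> i))\<^sup>2 / \<pi> i)"

definition masked :: "('d \<Rightarrow> real set) \<Rightarrow> (real \<Rightarrow> real ^ 'p) \<Rightarrow> (real \<Rightarrow> real ^ 'p)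
    \<Rightarrow> ('p \<times> 'd) set \<Rightarrow> real \<Rightarrow> real ^ 'p" where
  "masked Tp X \<mu> Q = (\<lambda>t. \<chi> j. if \<exists>b. (j, b) \<in> Q \<and> t \<in> Tp b then X t $ j else \<mu> t $ j)"

definition shapley :: "('c::finite set \<Rightarrow> real) \<Rightarrow> 'c \<Rightarrow> real" where
  "shapley v c = (\<Sum>Q\<in>Pow (UNIV - {c}).
      (fact (card Q) * fact (CARD('c) - card Q - 1) / fact (CARD('c))) * (v (insert c Q) - v Q))"

end

theory Submission
  imports Defs
begin



lemma L2_meas: "L2_on S f \<Longrightarrow> (\<lambda>t. indicator S t * f t) \<in> borel_measurable lborel"
  unfolding L2_on_def set_borel_measurable_def by simp

lemma L2_prod:
  assumes "L2_on S f" "L2_on S g"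
  shows "set_integrable lborel S (\<lambda>t. f t * g t)"
proof -
  have m: "(\<lambda>t. indicator S t * (f t * g t)) \<in> borel_measurable lborel"
  proof -
    have "(\<lambda>t. (indicator S t * f t) * (indicator S t * g t)) \<in> borel_measurable lborel"
      using L2_meas[OF assms(1)] L2_meas[OF assms(2)] by measurable
    moreover have "(\<lambda>t. (indicator S t * f t) * (indicator S t * g t)) = (\<lambda>t. indicator S t * (f t * g t))"
      by (auto simp: indicator_def)
    ultimately show ?thesis by simp
  qed
  have i: "set_integrable lborel S (\<lambda>t. (f t)\<^sup>2 + (g t)\<^sup>2)"
    using assms unfolding L2_on_def by (intro set_integral_add) auto
  have b: "AE x in lborel. norm (indicator S x *\<^sub>R (f x * g x)) \<le> norm (indicator S x *\<^sub>R ((f x)\<^sup>2 + (g x)\<^sup>2))"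
  proof (rule AE_I2)
    fix x
    have "\<bar>f x * g x\<bar> \<le> (f x)\<^sup>2 + (g x)\<^sup>2"
    proof -
      have "0 \<le> (\<bar>f x\<bar> - \<bar>g x\<bar>)\<^sup>2" by simp
      hence "2*(\<bar>f x\<bar>*\<bar>g x\<bar>) \<le> (f x)\<^sup>2 + (g x)\<^sup>2"
        by (simp add: power2_eq_square algebra_simps abs_mult_self_eq)
      moreover have "0 \<le> \<bar>f x\<bar>*\<bar>g x\<bar>" by simp
      moreover have "\<bar>f x * g x\<bar> = \<bar>f x\<bar>*\<bar>g x\<bar>" by (rule abs_mult)
      ultimately show ?thesis by linarith
    qed
    then show "norm (indicator S x *\<^sub>R (f x * g x)) \<le> norm (indicator S x *\<^sub>R ((f x)\<^sup>2 + (g x)\<^sup>2))"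
      by (auto simp: indicator_def)
  qed
  show ?thesis unfolding set_integrable_def
    using Bochner_Integration.integrable_bound[OF i[unfolded set_integrable_def] _ b] m by simp
qed

lemma L2_add:
  assumes "L2_on S f" "L2_on S g"
  shows "L2_on S (\<lambda>t. f t + g t)"
proof -
  have "(\<lambda>t. indicator S t * f t + indicator S t * g t) \<in> borel_measurable lborel"
    using L2_meas[OF assms(1)] L2_meas[OF assms(2)] by measurable
  hence m: "set_borel_measurable lborel S (\<lambda>t. f t + g t)"
    unfolding set_borel_measurable_def by (simp add: distrib_left)
  have "set_integrable lborel S (\<lambda>t. (f t)\<^sup>2 + 2 * (f t * g t) + (g t)\<^sup>2)"
    using assms L2_prod[OF assms] unfolding L2_on_def by (intro set_integral_add set_integrable_mult_right) auto
  moreover have "(\<lambda>t. (f t)\<^sup>2 + 2 * (f t * g t) + (g t)\<^sup>2) = (\<lambda>t. (f t + g t)\<^sup>2)"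
    by (auto simp: power2_eq_square algebra_simps)
  ultimately show ?thesis using m unfolding L2_on_def by simp
qed

lemma L2_cmult:
  assumes "L2_on S f"
  shows "L2_on S (\<lambda>t. c * f t)"
proof -
  have "(\<lambda>t. c * (indicator S t * f t)) \<in> borel_measurable lborel"
    using L2_meas[OF assms] by measurable
  hence m: "set_borel_measurable lborel S (\<lambda>t. c * f t)"
    unfolding set_borel_measurable_def by (simp add: ac_simps)
  have "set_integrable lborel S (\<lambda>t. c\<^sup>2 * (f t)\<^sup>2)"
    using assms unfolding L2_on_def by (intro set_integrable_mult_right) auto
  thus ?thesis using m unfolding L2_on_def by (simp add: power_mult_distrib)
qed

lemma L2_zero: "L2_on S (\<lambda>t. 0)"
  unfolding L2_on_def set_borel_measurable_def set_integrable_def by simp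

lemma L2_sum:
  assumes "\<And>a. a \<in> I \<Longrightarrow> L2_on S (f a)"
  shows "L2_on S (\<lambda>t. \<Sum>a\<in>I. f a t)"
  using assms
proof (induction I rule: infinite_finite_induct)
  case (infinite A) then show ?case by (simp add: L2_zero)
next
  case empty then show ?case by (simp add: L2_zero)
next
  case (insert x F) then show ?case by (simp add: L2_add)
qed

lemma L2_ind:
  assumes "L2_on S f" "B \<in> sets lborel"
  shows "L2_on S (\<lambda>t. indicator B t * f t)"
proof -
  have "(\<lambda>t. indicator B t * (indicator S t * f t)) \<in> borel_measurable lborel"
    using L2_meas[OF assms(1)] assms(2) by measurable
  hence m: "set_borel_measurable lborel S (\<lambda>t. indicator B t * f t)"
    unfolding set_borel_measurable_def by (simp add: ac_simps)
  have "integrable lborel (\<lambda>t. indicator B t *\<^sub>R (indicator S t *\<^sub>R (f t)\<^sup>2))"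
    using assms unfolding L2_on_def set_integrable_def
    by (intro integrable_mult_indicator[OF assms(2)]) auto
  hence "integrable lborel (\<lambda>t. indicator B t * (indicator S t * (f t)\<^sup>2))" by simp
  moreover have "(\<lambda>t. indicator B t * (indicator S t * (f t)\<^sup>2)) = (\<lambda>t. indicator S t *\<^sub>R (indicator B t * f t)\<^sup>2)"
    by (auto simp: indicator_def)
  ultimately show ?thesis using m unfolding L2_on_def set_integrable_def by simp
qed




lemma sum_pow_card:
  assumes "finite S"
  shows "(\<Sum>Q\<in>Pow S. g (card Q)) = (\<Sum>s\<le>card S. real (card S choose s) * (g s :: real))"
proof -
  have "(\<Sum>Q\<in>Pow S. g (card Q)) = (\<Sum>s\<le>card S. \<Sum>Q\<in>{Q. Q \<in> Pow S \<and> card Q = s}. g (card Q))"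
  proof (rule sum.group[of "Pow S" "{..card S}" card "\<lambda>Q. g (card Q)", symmetric])
    show "finite (Pow S)" using assms by simp
    show "finite {..card S}" by simp
    show "card ` Pow S \<subseteq> {..card S}" using assms by (auto intro!: card_mono)
  qed
  also have "\<dots> = (\<Sum>s\<le>card S. real (card S choose s) * g s)"
  proof (rule sum.cong[OF refl])
    fix s
    have "(\<Sum>Q\<in>{Q. Q \<in> Pow S \<and> card Q = s}. g (card Q)) = (\<Sum>Q\<in>{Q. Q \<subseteq> S \<and> card Q = s}. g s)"
      by (rule sum.cong) auto
    also have "\<dots> = real (card S choose s) * g s"
      using n_subsets[OF assms, of s] by simp
    finally show "(\<Sum>Q\<in>{Q. Q \<in> Pow S \<and> card Q = s}. g (card Q)) = real (card S choose s) * g s" .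
  qed
  finally show ?thesis .
qed

lemma fact_binom_real:
  assumes "s \<le> n"
  shows "real (n choose s) * fact s * fact (n - s) = fact n"
proof -
  have "fact s * fact (n - s) * (n choose s) = (fact n :: nat)"
    by (rule binomial_fact_lemma[OF assms])
  hence "real (fact s * fact (n - s) * (n choose s)) = real (fact n)" by simp
  thus ?thesis by (simp only: of_nat_mult of_nat_fact) (simp add: ac_simps)
qed

lemma weight_sum0:
  assumes "finite S" "card S = m"
  shows "(\<Sum>Q\<in>Pow S. fact (card Q) * fact (Suc m - card Q - 1) / fact (Suc m) :: real) = 1"
proof -
  have "(\<Sum>Q\<in>Pow S. fact (card Q) * fact (Suc m - card Q - 1) / fact (Suc m) :: real)
      = (\<Sum>s\<le>m. real (m choose s) * (fact s * fact (Suc m - s - 1) / fact (Suc m)))"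
    using sum_pow_card[OF assms(1), of "\<lambda>s. fact s * fact (Suc m - s - 1) / fact (Suc m)"] assms(2) by simp
  also have "\<dots> = (\<Sum>s\<le>m. fact m / fact (Suc m))"
  proof (rule sum.cong[OF refl])
    fix s assume "s \<in> {..m}"
    hence "s \<le> m" by simp
    hence e1: "real (m choose s) * fact s * fact (m - s) = fact m" by (rule fact_binom_real)
    have e2: "Suc m - s - 1 = m - s" by simp
    have "real (m choose s) * (fact s * fact (Suc m - s - 1) / fact (Suc m))
        = (real (m choose s) * fact s * fact (m - s)) / fact (Suc m)" unfolding e2 by (simp add: mult.assoc)
    also have "\<dots> = fact m / fact (Suc m)" unfolding e1 ..
    finally show "real (m choose s) * (fact s * fact (Suc m - s - 1) / fact (Suc m)) = fact m / fact (Suc m)" .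
  qed
  also have "\<dots> = real (Suc m) * (fact m / fact (Suc m))" by (simp only: sum_constant card_atMost)
  also have "\<dots> = 1"
  proof -
    have "(fact (Suc m) :: real) = real (Suc m) * fact m" by (rule fact_Suc)
    moreover have "(fact m :: real) \<noteq> 0" by simp
    ultimately show ?thesis by simp
  qed
  finally show ?thesis .
qed

lemma sum_succ_real2: "2 * (\<Sum>s\<le>m. real s + 1) = (real m + 1) * (real m + 2)"
  by (induction m) (simp_all add: algebra_simps)

lemma sum_succ_real: "(\<Sum>s\<le>m. real s + 1) = (real m + 1) * (real m + 2) / 2"
  using sum_succ_real2[of m] by simp

lemma weight_sum1:
  assumes "finite S" "card S = Suc m" "c \<in> S"
  shows "(\<Sum>Q\<in>{Q\<in>Pow S. c \<in> Q}. fact (card Q) * fact (Suc (Suc m) - card Q - 1) / fact (Suc (Suc m)) :: real) = 1/2"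
proof -
  define S' where "S' = S - {c}"
  have fS': "finite S'" and cS': "card S' = m" and cn: "c \<notin> S'"
    using assms by (auto simp: S'_def)
  have "{Q\<in>Pow S. c \<in> Q} = insert c ` Pow S'"
  proof
    show "{Q\<in>Pow S. c \<in> Q} \<subseteq> insert c ` Pow S'"
    proof
      fix Q assume "Q \<in> {Q\<in>Pow S. c \<in> Q}"
      hence "Q = insert c (Q - {c})" "Q - {c} \<in> Pow S'" by (auto simp: S'_def)
      thus "Q \<in> insert c ` Pow S'" by blast
    qed
    show "insert c ` Pow S' \<subseteq> {Q\<in>Pow S. c \<in> Q}" using assms(3) by (auto simp: S'_def)
  qed
  moreover have "inj_on (insert c) (Pow S')"
  proof (rule inj_onI)
    fix X Y assume "X \<in> Pow S'" "Y \<in> Pow S'" "insert c X = insert c Y"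
    moreover hence "c \<notin> X" "c \<notin> Y" using cn by auto
    ultimately show "X = Y" by (metis Diff_insert_absorb)
  qed
  ultimately have "(\<Sum>Q\<in>{Q\<in>Pow S. c \<in> Q}. fact (card Q) * fact (Suc (Suc m) - card Q - 1) / fact (Suc (Suc m)) :: real)
     = (\<Sum>Q\<in>Pow S'. fact (card (insert c Q)) * fact (Suc (Suc m) - card (insert c Q) - 1) / fact (Suc (Suc m)))"
    by (simp add: sum.reindex)
  also have "\<dots> = (\<Sum>Q\<in>Pow S'. fact (Suc (card Q)) * fact (Suc m - Suc (card Q)) / fact (Suc (Suc m)))"
  proof (rule sum.cong[OF refl])
    fix Q assume "Q \<in> Pow S'"
    hence "finite Q" "c \<notin> Q" using fS' cn finite_subset by auto
    thus "fact (card (insert c Q)) * fact (Suc (Suc m) - card (insert c Q) - 1) / fact (Suc (Suc m)) =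
          (fact (Suc (card Q)) * fact (Suc m - Suc (card Q)) / fact (Suc (Suc m)) :: real)" by simp
  qed
  also have "\<dots> = (\<Sum>s\<le>m. real (m choose s) * (fact (Suc s) * fact (Suc m - Suc s) / fact (Suc (Suc m))))"
    using sum_pow_card[OF fS', of "\<lambda>s. fact (Suc s) * fact (Suc m - Suc s) / fact (Suc (Suc m))"] cS' by simp
  also have "\<dots> = (\<Sum>s\<le>m. (real s + 1) * (fact m / fact (Suc (Suc m))))"
  proof (rule sum.cong[OF refl])
    fix s assume "s \<in> {..m}"
    hence "s \<le> m" by simp
    hence e1: "real (m choose s) * fact s * fact (m - s) = fact m" by (rule fact_binom_real)
    have e2: "Suc m - Suc s = m - s" by simp
    have e3: "(fact (Suc s) :: real) = (real s + 1) * fact s" by (simp add: fact_Suc)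
    have "real (m choose s) * (fact (Suc s) * fact (Suc m - Suc s) / fact (Suc (Suc m)))
       = (real s + 1) * ((real (m choose s) * fact s * fact (m - s)) / fact (Suc (Suc m)))"
      unfolding e2 e3 by (simp only: times_divide_eq_right mult.assoc mult.left_commute)
    also have "\<dots> = (real s + 1) * (fact m / fact (Suc (Suc m)))" unfolding e1 ..
    finally show "real (m choose s) * (fact (Suc s) * fact (Suc m - Suc s) / fact (Suc (Suc m))) =
        (real s + 1) * (fact m / fact (Suc (Suc m)))" .
  qed
  also have "\<dots> = (\<Sum>s\<le>m. real s + 1) * (fact m / fact (Suc (Suc m)))"
    by (rule sum_distrib_right[symmetric])
  also have "\<dots> = 1/2"
  proof -
    have f: "(fact (Suc (Suc m)) :: real) = (real m + 2) * ((real m + 1) * fact m)"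
      by (simp add: fact_Suc algebra_simps)
    have "(fact m :: real) \<noteq> 0" by simp
    thus ?thesis unfolding sum_succ_real f by (simp add: divide_simps)
  qed
  finally show ?thesis .
qed

lemma mult_sum_diff: "(a::real) * ((\<Sum>i\<in>I. x i) - (\<Sum>i\<in>I. y i)) = (\<Sum>i\<in>I. a * (x i - y i))"
  by (simp add: sum_distrib_left sum_subtractf right_diff_distrib)

lemma shapley_sum:
  "shapley (\<lambda>Q. \<Sum>i\<in>I. g i Q) c = (\<Sum>i\<in>I. shapley (g i) c)"
proof -
  have "shapley (\<lambda>Q. \<Sum>i\<in>I. g i Q) c = (\<Sum>Q\<in>Pow (UNIV - {c}). \<Sum>i\<in>I.
      (fact (card Q) * fact (CARD('a) - card Q - 1) / fact (CARD('a))) * (g i (insert c Q) - g i Q))"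
    unfolding shapley_def by (intro sum.cong refl) (rule mult_sum_diff)
  also have "\<dots> = (\<Sum>i\<in>I. shapley (g i) c)"
    unfolding shapley_def by (rule sum.swap)
  finally show ?thesis .
qed

lemma shapley_scale:
  "shapley (\<lambda>Q. x * g Q) c = x * shapley g c"
  unfolding shapley_def
  by (simp add: sum_distrib_left algebra_simps)

lemma shapley_quad:
  fixes b :: "'c::finite \<Rightarrow> real"
  shows "shapley (\<lambda>Q. (\<Sum>x\<in>Q. b x)\<^sup>2) c = b c * (\<Sum>x\<in>UNIV. b x)"
proof -
  define S where "S = (UNIV::'c set) - {c}"
  define n where "n = CARD('c)"
  have "0 < n" unfolding n_def by simp
  then obtain m where nm: "n = Suc m" using gr0_implies_Suc by blast
  have fS: "finite S" by simp
  have cS: "card S = m" using nm unfolding S_def n_def by (simp add: card_Diff_singleton)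
  define w where "w Q = (fact (card Q) * fact (n - card Q - 1) / fact n :: real)" for Q :: "'c set"
  define TQ where "TQ Q = (\<Sum>x\<in>S. if x \<in> Q then b x else 0)" for Q :: "'c set"
  have step: "(\<Sum>x\<in>insert c Q. b x)\<^sup>2 - (\<Sum>x\<in>Q. b x)\<^sup>2 = (b c)\<^sup>2 + 2 * b c * TQ Q"
    if "Q \<in> Pow S" for Q :: "'c set"
  proof -
    have QS: "Q \<subseteq> S" using that by simp
    have "c \<notin> Q" using QS unfolding S_def by auto
    hence e1: "(\<Sum>x\<in>insert c Q. b x) = b c + (\<Sum>x\<in>Q. b x)" by simp
    have "TQ Q = (\<Sum>x\<in>S \<inter> Q. b x)" unfolding TQ_def by (rule sum.inter_restrict[symmetric]) simp
    also have "S \<inter> Q = Q" using QS by blast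
    finally have e2: "TQ Q = (\<Sum>x\<in>Q. b x)" .
    show ?thesis unfolding e1 e2 by (simp add: power2_eq_square algebra_simps)
  qed
  have "shapley (\<lambda>Q. (\<Sum>x\<in>Q. b x)\<^sup>2) c = (\<Sum>Q\<in>Pow S. w Q * ((b c)\<^sup>2 + 2 * b c * TQ Q))"
    unfolding shapley_def S_def[symmetric] n_def[symmetric]
  proof (rule sum.cong[OF refl])
    fix Q assume "Q \<in> Pow S"
    show "fact (card Q) * fact (n - card Q - 1) / fact n * ((\<Sum>x\<in>insert c Q. b x)\<^sup>2 - (\<Sum>x\<in>Q. b x)\<^sup>2)
        = w Q * ((b c)\<^sup>2 + 2 * b c * TQ Q)"
      unfolding step[OF \<open>Q \<in> Pow S\<close>] w_def ..
  qed
  also have "\<dots> = (\<Sum>Q\<in>Pow S. (b c)\<^sup>2 * w Q + 2 * b c * (w Q * TQ Q))"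
    by (rule sum.cong[OF refl]) (simp add: algebra_simps)
  also have "\<dots> = (b c)\<^sup>2 * (\<Sum>Q\<in>Pow S. w Q) + 2 * b c * (\<Sum>Q\<in>Pow S. w Q * TQ Q)"
    by (simp only: sum.distrib sum_distrib_left)
  also have "(\<Sum>Q\<in>Pow S. w Q) = 1"
    unfolding w_def nm using weight_sum0[OF fS cS] by simp
  also have "(\<Sum>Q\<in>Pow S. w Q * TQ Q) = (\<Sum>x\<in>S. b x * (\<Sum>Q\<in>{Q\<in>Pow S. x \<in> Q}. w Q))"
  proof -
    have "(\<Sum>Q\<in>Pow S. w Q * TQ Q) = (\<Sum>Q\<in>Pow S. \<Sum>x\<in>S. w Q * (if x \<in> Q then b x else 0))"
      unfolding TQ_def by (simp only: sum_distrib_left)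
    also have "\<dots> = (\<Sum>x\<in>S. \<Sum>Q\<in>Pow S. w Q * (if x \<in> Q then b x else 0))"
      by (rule sum.swap)
    also have "\<dots> = (\<Sum>x\<in>S. b x * (\<Sum>Q\<in>{Q\<in>Pow S. x \<in> Q}. w Q))"
    proof (rule sum.cong[OF refl])
      fix x assume "x \<in> S"
      have "(\<Sum>Q\<in>Pow S. w Q * (if x \<in> Q then b x else 0)) = (\<Sum>Q\<in>Pow S. if x \<in> Q then w Q * b x else 0)"
        by (rule sum.cong) auto
      also have "\<dots> = (\<Sum>Q\<in>{Q\<in>Pow S. x \<in> Q}. w Q * b x)"
        using fS by (intro sum.inter_filter[symmetric]) simp
      also have "\<dots> = b x * (\<Sum>Q\<in>{Q\<in>Pow S. x \<in> Q}. w Q)"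
        unfolding sum_distrib_left by (rule sum.cong[OF refl]) (rule mult.commute)
      finally show "(\<Sum>Q\<in>Pow S. w Q * (if x \<in> Q then b x else 0)) = b x * (\<Sum>Q\<in>{Q\<in>Pow S. x \<in> Q}. w Q)" .
    qed
    finally show ?thesis .
  qed
  also have "(\<Sum>x\<in>S. b x * (\<Sum>Q\<in>{Q\<in>Pow S. x \<in> Q}. w Q)) = (\<Sum>x\<in>S. b x / 2)"
  proof (rule sum.cong[OF refl])
    fix x assume xS: "x \<in> S"
    have "m \<noteq> 0" using xS cS fS card_0_eq by blast
    then obtain m' where m': "m = Suc m'" using not0_implies_Suc by blast
    have "(\<Sum>Q\<in>{Q\<in>Pow S. x \<in> Q}. w Q) = 1/2"
      unfolding w_def nm m' using weight_sum1[OF fS cS[unfolded m'] xS] by simp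
    thus "b x * (\<Sum>Q\<in>{Q\<in>Pow S. x \<in> Q}. w Q) = b x / 2" by simp
  qed
  also have "(\<Sum>x\<in>S. b x / 2) = (\<Sum>x\<in>S. b x) / 2" by (rule sum_divide_distrib[symmetric])
  also have "(b c)\<^sup>2 * 1 + 2 * b c * ((\<Sum>x\<in>S. b x) / 2) = b c * (b c + (\<Sum>x\<in>S. b x))"
    by (simp add: power2_eq_square algebra_simps)
  also have "b c + (\<Sum>x\<in>S. b x) = (\<Sum>x\<in>UNIV. b x)"
    unfolding S_def by (simp add: sum.remove[of UNIV c])
  finally show ?thesis .
qed




lemma sint_sum:
  fixes f :: "'i \<Rightarrow> 'a \<Rightarrow> real"
  assumes "finite I" "\<And>i. i \<in> I \<Longrightarrow> set_integrable M A (f i)"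
  shows "(LINT t:A|M. (\<Sum>i\<in>I. f i t)) = (\<Sum>i\<in>I. LINT t:A|M. f i t)"
proof -
  have "(LINT t:A|M. (\<Sum>i\<in>I. f i t)) = integral\<^sup>L M (\<lambda>t. \<Sum>i\<in>I. indicator A t *\<^sub>R f i t)"
    unfolding set_lebesgue_integral_def by (simp add: sum_distrib_left)
  also have "\<dots> = (\<Sum>i\<in>I. integral\<^sup>L M (\<lambda>t. indicator A t *\<^sub>R f i t))"
    using assms unfolding set_integrable_def by (intro Bochner_Integration.integral_sum) auto
  finally show ?thesis unfolding set_lebesgue_integral_def .
qed

lemma sint_sum_integrable:
  fixes f :: "'i \<Rightarrow> 'a \<Rightarrow> real"
  assumes "\<And>i. i \<in> I \<Longrightarrow> set_integrable M A (f i)"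
  shows "set_integrable M A (\<lambda>t. \<Sum>i\<in>I. f i t)"
proof -
  have "integrable M (\<lambda>t. \<Sum>i\<in>I. indicator A t *\<^sub>R f i t)"
    using assms unfolding set_integrable_def by (intro Bochner_Integration.integrable_sum) auto
  thus ?thesis unfolding set_integrable_def by (simp add: sum_distrib_left)
qed

lemma dot_expand: "(c::real^'m) \<bullet> x = (\<Sum>a\<in>UNIV. c $ a * x $ a)"
  by (simp add: inner_vec_def)

lemma lint_dot:
  fixes \<phi> :: "real \<Rightarrow> real ^ 'm::finite"
  assumes "\<And>a. set_integrable lborel B (\<lambda>t. \<phi> t $ a * y t)"
  shows "(LINT t:B|lborel. (c \<bullet> \<phi> t) * y t) = c \<bullet> (\<chi> a. LINT t:B|lborel. \<phi> t $ a * y t)"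
proof -
  have "(LINT t:B|lborel. (c \<bullet> \<phi> t) * y t) = (LINT t:B|lborel. (\<Sum>a\<in>UNIV. c $ a * (\<phi> t $ a * y t)))"
    unfolding dot_expand by (simp add: sum_distrib_right mult.assoc)
  also have "\<dots> = (\<Sum>a\<in>UNIV. LINT t:B|lborel. c $ a * (\<phi> t $ a * y t))"
    using assms by (intro sint_sum) auto
  also have "\<dots> = c \<bullet> (\<chi> a. LINT t:B|lborel. \<phi> t $ a * y t)"
    unfolding dot_expand by simp
  finally show ?thesis .
qed

lemma lint_cong_AE:
  fixes f g :: "real \<Rightarrow> real"
  assumes "set_integrable lborel S f" "set_integrable lborel S g"
    and "AE t in lborel. t \<in> S \<longrightarrow> f t = g t"
  shows "(LINT t:S|lborel. f t) = (LINT t:S|lborel. g t)"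
  unfolding set_lebesgue_integral_def
proof (rule integral_cong_AE)
  show "(\<lambda>t. indicator S t *\<^sub>R f t) \<in> borel_measurable lborel"
    using assms(1) unfolding set_integrable_def by (rule borel_measurable_integrable)
  show "(\<lambda>t. indicator S t *\<^sub>R g t) \<in> borel_measurable lborel"
    using assms(2) unfolding set_integrable_def by (rule borel_measurable_integrable)
  show "AE t in lborel. indicator S t *\<^sub>R f t = indicator S t *\<^sub>R g t"
    using assms(3) by eventually_elim (auto simp: indicator_def)
qed

lemma transpose_mv_comp: "(transpose M *v x) $ j = column j M \<bullet> x"
  by (simp add: matrix_vector_mult_def transpose_def column_def inner_vec_def mult.commute)

lemma column_diff: "column j (A - B) = column j A - column j (B::real^'p::finite^'m::finite)"
  by (simp add: column_def vec_eq_iff)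

lemma vm_comp: "(x v* M) $ j = column j M \<bullet> x"
  using transpose_mv_comp[of M x j] by simp

lemma frob: "(\<Sum>j\<in>UNIV. column j D \<bullet> (\<chi> a. f a j)) = (D::real^'p::finite^'m::finite) \<bullet> (\<chi> a j. f a j)"
  by (simp add: inner_vec_def column_def sum.swap[of _ "UNIV::'p set"])

lemma sym_entry: "transpose S = S \<Longrightarrow> S $ i $ j = S $ j $ i"
  by (metis transpose_def vec_lambda_beta)

lemma sym_lemma:
  fixes S1 :: "real^'m::finite^'m" and S2 :: "real^'p::finite^'p" and c :: "'p \<Rightarrow> real^'m"
  assumes "transpose S1 = S1" "transpose S2 = S2"
  shows "(\<Sum>j\<in>UNIV. S2$l$j * ((S1 *v x) \<bullet> c j)) = column l (S1 ** (\<chi> a j. c j $ a) ** S2) \<bullet> x"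
proof -
  have "(\<Sum>j\<in>UNIV. S2$l$j * ((S1 *v x) \<bullet> c j)) = (\<Sum>j\<in>UNIV. \<Sum>a\<in>UNIV. \<Sum>b\<in>UNIV. S2$j$l * S1$b$a * c j $ a * x $ b)"
    using sym_entry[OF assms(1)] sym_entry[OF assms(2)]
    using sym_entry[OF assms(1)] sym_entry[OF assms(2)]
    by (simp add: inner_vec_def matrix_vector_mult_def sum_distrib_left sum_distrib_right ac_simps)
  also have "\<dots> = (\<Sum>j\<in>UNIV. \<Sum>b\<in>UNIV. \<Sum>a\<in>UNIV. S2$j$l * S1$b$a * c j $ a * x $ b)"
    by (rule sum.cong[OF refl], rule sum.swap)
  also have "\<dots> = (\<Sum>b\<in>UNIV. \<Sum>j\<in>UNIV. \<Sum>a\<in>UNIV. S2$j$l * S1$b$a * c j $ a * x $ b)"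
    by (rule sum.swap)
  also have "\<dots> = column l (S1 ** (\<chi> a j. c j $ a) ** S2) \<bullet> x"
    by (simp add: inner_vec_def matrix_matrix_mult_def column_def sum_distrib_left sum_distrib_right ac_simps)
  finally show ?thesis .
qed

lemma inner_sym_mat: "transpose M = M \<Longrightarrow> (x::real^'n::finite) \<bullet> (M *v y) = (M *v x) \<bullet> y"
  by (metis dot_lmul_matrix transpose_matrix_vector)

lemma pd_inj:
  assumes "pos_def S" "S *v x = 0"
  shows "x = 0"
  using assms unfolding pos_def_def by force

lemma pd_sym: "pos_def S \<Longrightarrow> transpose S = S"
  unfolding pos_def_def by blast

lemma pd_inverse:
  assumes "pos_def (S::real^'n::finite^'n)"
  shows "\<exists>B. B ** S = mat 1 \<and> S ** B = mat 1"
proof -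
  obtain B where "B ** S = mat 1" using matrix_left_invertible_ker[of S] pd_inj[OF assms] by blast
  thus ?thesis using matrix_left_right_inverse by blast
qed

lemma mm_zero_r: "A ** (0::real^'n::finite^'m::finite) = (0::real^'n^'k::finite)"
  by (simp add: matrix_matrix_mult_def vec_eq_iff)
lemma mm_zero_l: "(0::real^'m::finite^'k::finite) ** B = (0::real^'n::finite^'k)"
  by (simp add: matrix_matrix_mult_def vec_eq_iff)

lemma inv_props:
  assumes "invertible (A::real^'n::finite^'n)"
  shows "A ** matrix_inv A = mat 1" "matrix_inv A ** A = mat 1"
proof -
  have "A ** matrix_inv A = mat 1 \<and> matrix_inv A ** A = mat 1"
    using assms unfolding invertible_def matrix_inv_def by (rule someI_ex)
  thus "A ** matrix_inv A = mat 1" "matrix_inv A ** A = mat 1" by auto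
qed

lemma column_scale: "column l (c *\<^sub>R M) = c *\<^sub>R column l (M::real^'p::finite^'m::finite)"
  by (simp add: column_def vec_eq_iff)

locale L5 =
  fixes lo hi :: real
    and Tp :: "'d::finite \<Rightarrow> real set"
    and \<phi> :: "real \<Rightarrow> real ^ 'm::finite"
    and A MA :: "real ^ 'p::finite ^ 'm"
    and Srow :: "real ^ 'p ^ 'p"
    and Scol :: "real ^ 'm ^ 'm"
    and \<psi> :: "nat \<Rightarrow> real \<Rightarrow> real ^ 'p"
    and \<pi> :: "nat \<Rightarrow> real"
    and lam :: "'p \<Rightarrow> real"
    and v :: "'p \<Rightarrow> real ^ 'p"
  assumes part_int: "\<And>b. is_interval (Tp b)"
    and part_disj: "\<And>b b'. b \<noteq> b' \<Longrightarrow> Tp b \<inter> Tp b' = {}"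
    and part_cover: "(\<Union>b. Tp b) = {lo..hi}"
    and phi_L2: "\<And>i. L2_on {lo..hi} (\<lambda>t. \<phi> t $ i)"
    and phi_indep: "\<And>c. (AE t in lborel. t \<in> {lo..hi} \<longrightarrow> c \<bullet> \<phi> t = 0) \<Longrightarrow> c = 0"
    and Srow_pd: "pos_def Srow"
    and Scol_pd: "pos_def Scol"
    and psi_L2: "\<And>i. L2p_on {lo..hi} (\<psi> i)"
    and psi_orth: "\<And>i j. ip {lo..hi} (\<psi> i) (\<psi> j) = (if i = j then 1 else 0)"
    and psi_eig: "\<And>i. AE t in lborel. t \<in> {lo..hi} \<longrightarrow>
        cov_op {lo..hi} (\<lambda>s t. (\<phi> s \<bullet> (Scol *v \<phi> t)) *\<^sub>R Srow) (\<psi> i) t = \<pi> i *\<^sub>R \<psi> i t"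
    and pi_noninc: "decseq \<pi>"
    and psi_complete: "\<And>x. L2p_on {lo..hi} x \<Longrightarrow> (\<lambda>i. (ip {lo..hi} x (\<psi> i))\<^sup>2) sums ip {lo..hi} x x"
    and v_eig: "\<And>j. Srow *v v j = lam j *\<^sub>R v j"
    and v_orth: "\<And>i j. v i \<bullet> v j = (if i = j then 1 else 0)"
begin

abbreviation "T \<equiv> {lo..hi}"

definition "u i j = (\<chi> a. LINT t:T|lborel. \<phi> t $ a * \<psi> i t $ j)"
definition "U i = (\<chi> a j. u i j $ a)"
definition "H i = Scol ** U i ** Srow"
definition "D = A - MA"

lemma T_sets[measurable]: "T \<in> sets lborel" by simp

lemma Tp_sets[measurable]: "Tp b \<in> sets lborel"
  using real_interval_borel_measurable[OF part_int[of b]] by simp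

lemma Tp_sub: "Tp b \<subseteq> T" using part_cover by blast

lemma psiL2: "L2_on T (\<lambda>t. \<psi> i t $ j)"
  using psi_L2[of i] unfolding L2p_on_def by blast

lemma dotL2: "L2_on T (\<lambda>t. c \<bullet> \<phi> t)"
  unfolding dot_expand by (intro L2_sum L2_cmult phi_L2)

lemma int_sub: "set_integrable lborel T (f::real\<Rightarrow>real) \<Longrightarrow> set_integrable lborel (Tp b) f"
  using set_integrable_subset[of lborel T f "Tp b"] Tp_sets Tp_sub by blast

lemma int_phipsi: "set_integrable lborel T (\<lambda>t. \<phi> t $ a * \<psi> i t $ j)"
  by (rule L2_prod[OF phi_L2 psiL2])

lemma int_phiphi: "set_integrable lborel T (\<lambda>t. \<phi> t $ a * \<phi> t $ b)"
  by (rule L2_prod[OF phi_L2 phi_L2])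

lemma int_psipsi: "set_integrable lborel T (\<lambda>t. \<psi> i t $ l * \<psi> j t $ l)"
  by (rule L2_prod[OF psiL2 psiL2])

lemma int_dotpsi: "set_integrable lborel T (\<lambda>t. (c \<bullet> \<phi> t) * \<psi> i t $ j)"
  by (rule L2_prod[OF dotL2 psiL2])

lemma ip_X: "ip T (\<lambda>t. transpose A *v \<phi> t - transpose MA *v \<phi> t) (\<psi> i) = D \<bullet> U i"
proof -
  have "ip T (\<lambda>t. transpose A *v \<phi> t - transpose MA *v \<phi> t) (\<psi> i)
      = (\<Sum>j\<in>UNIV. LINT t:T|lborel. (column j D \<bullet> \<phi> t) * \<psi> i t $ j)"
    unfolding ip_def D_def
    by (intro sum.cong refl) (simp only: vector_minus_component transpose_mv_comp inner_diff_left column_diff)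
  also have "\<dots> = (\<Sum>j\<in>UNIV. column j D \<bullet> u i j)"
    unfolding u_def by (intro sum.cong refl lint_dot int_phipsi)
  also have "\<dots> = D \<bullet> U i"
    unfolding U_def using frob[of D "\<lambda>a j. u i j $ a"] by simp
  finally show ?thesis .
qed

lemma Scol_sym: "transpose Scol = Scol" using pd_sym[OF Scol_pd] .
lemma Srow_sym: "transpose Srow = Srow" using pd_sym[OF Srow_pd] .

lemma cov_psi: "cov_op T (\<lambda>s t. (\<phi> s \<bullet> (Scol *v \<phi> t)) *\<^sub>R Srow) (\<psi> i) s = transpose (H i) *v \<phi> s"
proof -
  have "(\<Sum>j\<in>UNIV. LINT t:T|lborel. ((\<phi> s \<bullet> (Scol *v \<phi> t)) *\<^sub>R Srow) $ l $ j * \<psi> i t $ j)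
      = (transpose (H i) *v \<phi> s) $ l" for l
  proof -
    have "(\<Sum>j\<in>UNIV. LINT t:T|lborel. ((\<phi> s \<bullet> (Scol *v \<phi> t)) *\<^sub>R Srow) $ l $ j * \<psi> i t $ j)
        = (\<Sum>j\<in>UNIV. LINT t:T|lborel. Srow $ l $ j * (((Scol *v \<phi> s) \<bullet> \<phi> t) * \<psi> i t $ j))"
      by (intro sum.cong refl) (simp add: inner_sym_mat[OF Scol_sym] ac_simps)
    also have "\<dots> = (\<Sum>j\<in>UNIV. Srow $ l $ j * ((Scol *v \<phi> s) \<bullet> u i j))"
      unfolding u_def set_integral_mult_right by (intro sum.cong refl arg_cong2[where f="(*)"] lint_dot int_phipsi)
    also have "\<dots> = column l (H i) \<bullet> \<phi> s"
      unfolding H_def U_def by (rule sym_lemma[OF Scol_sym Srow_sym])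
    finally show ?thesis by (simp only: transpose_mv_comp)
  qed
  thus ?thesis unfolding cov_op_def by (simp add: vec_eq_iff)
qed

lemma eigH: "AE t in lborel. t \<in> T \<longrightarrow> \<pi> i *\<^sub>R \<psi> i t = transpose (H i) *v \<phi> t"
  using psi_eig[of i] by eventually_elim (simp add: cov_psi)

lemma eigH_comp: "AE t in lborel. t \<in> T \<longrightarrow> \<pi> i * \<psi> i t $ l = column l (H i) \<bullet> \<phi> t"
proof -
  have key: "\<pi> i * \<psi> i t $ l = column l (H i) \<bullet> \<phi> t"
    if "\<pi> i *\<^sub>R \<psi> i t = transpose (H i) *v \<phi> t" for t
  proof -
    have "(\<pi> i *\<^sub>R \<psi> i t) $ l = (transpose (H i) *v \<phi> t) $ l" using that by simp
    thus ?thesis by (simp add: vm_comp)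
  qed
  show ?thesis using eigH[of i] by eventually_elim (use key in blast)
qed

lemma gram_sym: "gram S \<phi> $ a $ b = gram S \<phi> $ b $ a"
  by (simp add: gram_def mult.commute)

lemma lint_phi_dot:
  "(LINT t:T|lborel. \<phi> t $ a * (c \<bullet> \<phi> t)) = (gram T \<phi> *v c) $ a"
proof -
  have "(LINT t:T|lborel. \<phi> t $ a * (c \<bullet> \<phi> t)) = (LINT t:T|lborel. (c \<bullet> \<phi> t) * \<phi> t $ a)"
    by (simp add: mult.commute)
  also have "\<dots> = c \<bullet> (\<chi> b. LINT t:T|lborel. \<phi> t $ b * \<phi> t $ a)"
    by (intro lint_dot int_phiphi)
  also have "\<dots> = (gram T \<phi> *v c) $ a"
    by (simp add: inner_vec_def matrix_vector_mult_def gram_def mult.commute)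
  finally show ?thesis .
qed

lemma piU: "\<pi> i *\<^sub>R U i = gram T \<phi> ** H i"
proof -
  have "(\<pi> i *\<^sub>R U i) $ a $ j = (gram T \<phi> ** H i) $ a $ j" for a j
  proof -
    have "(\<pi> i *\<^sub>R U i) $ a $ j = (LINT t:T|lborel. \<phi> t $ a * (\<pi> i * \<psi> i t $ j))"
      by (simp add: U_def u_def ac_simps)
    also have "\<dots> = (LINT t:T|lborel. \<phi> t $ a * (column j (H i) \<bullet> \<phi> t))"
    proof (rule lint_cong_AE)
      show "set_integrable lborel T (\<lambda>t. \<phi> t $ a * (\<pi> i * \<psi> i t $ j))"
        using int_phipsi[of a i j] set_integrable_mult_right[of "\<pi> i"] by (simp add: ac_simps)
      show "set_integrable lborel T (\<lambda>t. \<phi> t $ a * (column j (H i) \<bullet> \<phi> t))"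
        by (rule L2_prod[OF phi_L2 dotL2])
      show "AE t in lborel. t \<in> T \<longrightarrow> \<phi> t $ a * (\<pi> i * \<psi> i t $ j) = \<phi> t $ a * (column j (H i) \<bullet> \<phi> t)"
        using eigH_comp[of i j] by eventually_elim simp
    qed
    also have "\<dots> = (gram T \<phi> *v column j (H i)) $ a" by (rule lint_phi_dot)
    also have "\<dots> = (gram T \<phi> ** H i) $ a $ j"
      by (simp add: matrix_vector_mult_def matrix_matrix_mult_def column_def)
    finally show ?thesis .
  qed
  thus ?thesis by (simp add: vec_eq_iff)
qed

lemma phi_zero_AE:
  assumes "AE t in lborel. t \<in> T \<longrightarrow> transpose M *v \<phi> t = 0"
  shows "M = 0"
proof -
  have c0: "column l M = 0" for l
  proof (rule phi_indep)
    have key: "column l M \<bullet> \<phi> t = 0" if "transpose M *v \<phi> t = 0" for t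
      using arg_cong[where f="\<lambda>x. x $ l", OF that] by (simp add: vm_comp)
    show "AE t in lborel. t \<in> T \<longrightarrow> column l M \<bullet> \<phi> t = 0"
      using assms by eventually_elim (use key in blast)
  qed
  have "M $ a $ l = 0" for a l
  proof -
    have "column l M $ a = 0" by (simp add: c0)
    thus ?thesis by (simp add: column_def)
  qed
  thus ?thesis by (simp add: vec_eq_iff)
qed

lemma pi0: "\<pi> i = 0 \<Longrightarrow> U i = 0"
proof -
  assume p0: "\<pi> i = 0"
  have "AE t in lborel. t \<in> T \<longrightarrow> transpose (H i) *v \<phi> t = 0"
    using eigH[of i] by eventually_elim (simp add: p0)
  hence H0: "H i = 0" by (rule phi_zero_AE)
  obtain B1 where B1: "B1 ** Scol = mat 1" using pd_inverse[OF Scol_pd] by blast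
  obtain B2 where B2: "Srow ** B2 = mat 1" using pd_inverse[OF Srow_pd] by blast
  have "U i = (B1 ** Scol) ** U i ** (Srow ** B2)" by (simp add: B1 B2)
  also have "\<dots> = B1 ** H i ** B2" by (simp add: H_def matrix_mul_assoc)
  also have "\<dots> = 0" by (simp add: H0 mm_zero_r mm_zero_l)
  finally show "U i = 0" .
qed

lemma W_quad: "c \<bullet> (gram T \<phi> *v c) = (LINT t:T|lborel. (c \<bullet> \<phi> t) * (c \<bullet> \<phi> t))"
proof -
  have "(LINT t:T|lborel. (c \<bullet> \<phi> t) * (c \<bullet> \<phi> t)) = c \<bullet> (\<chi> a. LINT t:T|lborel. \<phi> t $ a * (c \<bullet> \<phi> t))"
    by (intro lint_dot L2_prod[OF phi_L2 dotL2])
  also have "(\<chi> a. LINT t:T|lborel. \<phi> t $ a * (c \<bullet> \<phi> t)) = gram T \<phi> *v c"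
    by (simp add: vec_eq_iff lint_phi_dot)
  finally show ?thesis by simp
qed

lemma W_inj:
  assumes "gram T \<phi> *v c = 0"
  shows "c = 0"
proof (rule phi_indep)
  have "(LINT t:T|lborel. (c \<bullet> \<phi> t) * (c \<bullet> \<phi> t)) = 0" using W_quad[of c] assms by simp
  hence "integral\<^sup>L lborel (\<lambda>t. indicator T t * ((c \<bullet> \<phi> t) * (c \<bullet> \<phi> t))) = 0"
    unfolding set_lebesgue_integral_def by simp
  moreover have "integrable lborel (\<lambda>t. indicator T t * ((c \<bullet> \<phi> t) * (c \<bullet> \<phi> t)))"
    using L2_prod[OF dotL2 dotL2, of c c] unfolding set_integrable_def by simp
  moreover have "AE t in lborel. 0 \<le> indicator T t * ((c \<bullet> \<phi> t) * (c \<bullet> \<phi> t))"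
    by (intro AE_I2) (simp add: indicator_def)
  ultimately have "AE t in lborel. indicator T t * ((c \<bullet> \<phi> t) * (c \<bullet> \<phi> t)) = 0"
    using integral_nonneg_eq_0_iff_AE by blast
  thus "AE t in lborel. t \<in> T \<longrightarrow> c \<bullet> \<phi> t = 0"
    by eventually_elim (simp add: indicator_def)
qed

lemma W_invertible: "invertible (gram T \<phi>)"
  using matrix_left_invertible_ker[of "gram T \<phi>"] W_inj invertible_left_inverse by blast

end



context L5 begin

definition "G i = (1 / \<pi> i) *\<^sub>R H i"

lemma psi_G:
  assumes "\<pi> i \<noteq> 0"
  shows "AE t in lborel. t \<in> T \<longrightarrow> \<psi> i t $ l = column l (G i) \<bullet> \<phi> t"
  using eigH_comp[of i l]
proof eventually_elim
  case (elim t)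
  show ?case
  proof
    assume "t \<in> T"
    hence "\<pi> i * \<psi> i t $ l = column l (H i) \<bullet> \<phi> t" using elim by blast
    hence "\<psi> i t $ l = (1 / \<pi> i) * (column l (H i) \<bullet> \<phi> t)" using assms by (simp add: field_simps)
    thus "\<psi> i t $ l = column l (G i) \<bullet> \<phi> t" unfolding G_def column_scale by simp
  qed
qed

lemma G_U:
  assumes "\<pi> i \<noteq> 0"
  shows "G i \<bullet> U j = (if j = i then 1 else 0)"
proof -
  have "ip T (\<psi> j) (\<psi> i) = (\<Sum>l\<in>UNIV. LINT t:T|lborel. \<psi> j t $ l * \<psi> i t $ l)"
    unfolding ip_def ..
  also have "\<dots> = (\<Sum>l\<in>UNIV. LINT t:T|lborel. (column l (G i) \<bullet> \<phi> t) * \<psi> j t $ l)"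
  proof (intro sum.cong refl lint_cong_AE)
    fix l
    show "set_integrable lborel T (\<lambda>t. \<psi> j t $ l * \<psi> i t $ l)" by (rule int_psipsi)
    show "set_integrable lborel T (\<lambda>t. (column l (G i) \<bullet> \<phi> t) * \<psi> j t $ l)" by (rule int_dotpsi)
    show "AE t in lborel. t \<in> T \<longrightarrow> \<psi> j t $ l * \<psi> i t $ l = (column l (G i) \<bullet> \<phi> t) * \<psi> j t $ l"
      using psi_G[OF assms, of l] by eventually_elim (auto simp: mult.commute)
  qed
  also have "\<dots> = (\<Sum>l\<in>UNIV. column l (G i) \<bullet> u j l)"
    unfolding u_def by (intro sum.cong refl lint_dot int_phipsi)
  also have "\<dots> = G i \<bullet> U j"
    unfolding U_def using frob[of "G i" "\<lambda>a l. u j l $ a"] by simp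
  finally show ?thesis using psi_orth[of j i] by simp
qed

lemma card_nonzero:
  assumes "finite I" "\<And>i. i \<in> I \<Longrightarrow> \<pi> i \<noteq> 0"
  shows "card I \<le> CARD('m) * CARD('p)"
proof -
  have inj: "inj_on G I"
  proof (rule inj_onI)
    fix i j assume ij: "i \<in> I" "j \<in> I" "G i = G j"
    have "G i \<bullet> U i = 1" using G_U[OF assms(2)[OF ij(1)], of i] by simp
    moreover have "G j \<bullet> U i = (if i = j then 1 else 0)" using G_U[OF assms(2)[OF ij(2)], of i] by simp
    ultimately show "i = j" using ij(3) by (auto split: if_splits)
  qed
  have ind: "independent (G ` I)"
  proof
    assume "dependent (G ` I)"
    then obtain t c where t: "finite t" "t \<subseteq> G ` I" "(\<Sum>v\<in>t. c v *\<^sub>R v) = 0" and "\<exists>v\<in>t. c v \<noteq> 0"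
      unfolding real_vector.dependent_explicit by blast
    then obtain v0 where v0: "v0 \<in> t" "c v0 \<noteq> 0" by blast
    then obtain j0 where j0: "j0 \<in> I" "v0 = G j0" using t(2) by blast
    have dv: "v \<bullet> U j0 = (if v = v0 then 1 else 0)" if vt: "v \<in> t" for v
    proof -
      obtain i where i: "i \<in> I" "v = G i" using vt t(2) by blast
      have "v \<bullet> U j0 = (if j0 = i then 1 else 0)" using G_U[OF assms(2)[OF i(1)], of j0] i by simp
      also have "\<dots> = (if v = v0 then 1 else 0)"
        using inj i j0 by (auto simp: inj_on_def)
      finally show ?thesis .
    qed
    have "0 = (\<Sum>v\<in>t. c v *\<^sub>R v) \<bullet> U j0" using t(3) by simp
    also have "\<dots> = (\<Sum>v\<in>t. c v * (v \<bullet> U j0))" by (simp add: inner_sum_left)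
    also have "\<dots> = (\<Sum>v\<in>t. if v = v0 then c v else 0)"
      by (intro sum.cong refl) (simp add: dv)
    also have "\<dots> = c v0" using t(1) v0(1) by simp
    finally show False using v0(2) by simp
  qed
  have "card (G ` I) \<le> DIM(real^'p^'m)" using independent_bound[OF ind] by blast
  moreover have "card (G ` I) = card I" using card_image[OF inj] .
  ultimately show ?thesis by simp
qed

lemma pi_zero:
  assumes "CARD('m) * CARD('p) \<le> n"
  shows "\<pi> n = 0"
proof (rule ccontr)
  assume nz: "\<pi> n \<noteq> 0"
  show False
  proof (cases "\<pi> n > 0")
    case True
    have "\<pi> i \<noteq> 0" if "i \<in> {0..n}" for i
    proof -
      have "\<pi> n \<le> \<pi> i" using pi_noninc that unfolding decseq_def by simp
      thus ?thesis using True by simp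
    qed
    hence "card {0..n} \<le> CARD('m) * CARD('p)" by (intro card_nonzero) auto
    thus False using assms by simp
  next
    case False
    hence neg: "\<pi> n < 0" using nz by simp
    have "\<pi> i \<noteq> 0" if "i \<in> {n..n + CARD('m) * CARD('p)}" for i
    proof -
      have "\<pi> i \<le> \<pi> n" using pi_noninc that unfolding decseq_def by simp
      thus ?thesis using neg by simp
    qed
    hence "card {n..n + CARD('m) * CARD('p)} \<le> CARD('m) * CARD('p)" by (intro card_nonzero) auto
    thus False by simp
  qed
qed

end



lemma L2_diff:
  assumes "L2_on S f" "L2_on S g"
  shows "L2_on S (\<lambda>t. f t - g t)"
proof -
  have "L2_on S (\<lambda>t. f t + (-1) * g t)" by (intro L2_add L2_cmult assms)
  thus ?thesis by simp
qed

lemma L2p_add: "L2p_on S x \<Longrightarrow> L2p_on S y \<Longrightarrow> L2p_on S (\<lambda>t. x t + y t)"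
  unfolding L2p_on_def by (simp add: L2_add)

lemma L2p_diff: "L2p_on S x \<Longrightarrow> L2p_on S y \<Longrightarrow> L2p_on S (\<lambda>t. x t - y t)"
  unfolding L2p_on_def by (simp add: L2_diff)

lemma ip_sym: "ip S x y = ip S y x"
  unfolding ip_def by (simp add: mult.commute)

lemma ip_add_left:
  assumes "L2p_on S x" "L2p_on S y" "L2p_on S z"
  shows "ip S (\<lambda>t. x t + y t) z = ip S x z + ip S y z"
proof -
  have "ip S (\<lambda>t. x t + y t) z = (\<Sum>j\<in>UNIV. (LINT t:S|lborel. x t $ j * z t $ j) + (LINT t:S|lborel. y t $ j * z t $ j))"
    unfolding ip_def
  proof (intro sum.cong refl)
    fix j
    have ix: "set_integrable lborel S (\<lambda>t. x t $ j * z t $ j)"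
      using assms unfolding L2p_on_def by (intro L2_prod) auto
    have iy: "set_integrable lborel S (\<lambda>t. y t $ j * z t $ j)"
      using assms unfolding L2p_on_def by (intro L2_prod) auto
    show "(LINT t:S|lborel. (x t + y t) $ j * z t $ j) = (LINT t:S|lborel. x t $ j * z t $ j) + (LINT t:S|lborel. y t $ j * z t $ j)"
      using set_integral_add(2)[OF ix iy] by (simp add: distrib_right)
  qed
  thus ?thesis unfolding ip_def by (simp add: sum.distrib)
qed

lemma ip_diff_left:
  assumes "L2p_on S x" "L2p_on S y" "L2p_on S z"
  shows "ip S (\<lambda>t. x t - y t) z = ip S x z - ip S y z"
proof -
  have "ip S (\<lambda>t. x t - y t) z = (\<Sum>j\<in>UNIV. (LINT t:S|lborel. x t $ j * z t $ j) - (LINT t:S|lborel. y t $ j * z t $ j))"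
    unfolding ip_def
  proof (intro sum.cong refl)
    fix j
    have ix: "set_integrable lborel S (\<lambda>t. x t $ j * z t $ j)"
      using assms unfolding L2p_on_def by (intro L2_prod) auto
    have iy: "set_integrable lborel S (\<lambda>t. y t $ j * z t $ j)"
      using assms unfolding L2p_on_def by (intro L2_prod) auto
    show "(LINT t:S|lborel. (x t - y t) $ j * z t $ j) = (LINT t:S|lborel. x t $ j * z t $ j) - (LINT t:S|lborel. y t $ j * z t $ j)"
      using set_integral_diff(2)[OF ix iy] by (simp add: left_diff_distrib)
  qed
  thus ?thesis unfolding ip_def by (simp add: sum_subtractf)
qed

lemma polar:
  assumes f: "L2p_on S f" and h: "L2p_on S h" and e: "\<And>i. L2p_on S (e i)"
    and pars: "\<And>x. L2p_on S x \<Longrightarrow> (\<lambda>i. (ip S x (e i))\<^sup>2) sums ip S x x"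
  shows "(\<lambda>i. ip S f (e i) * ip S h (e i)) sums ip S f h"
proof -
  have fh1: "L2p_on S (\<lambda>t. f t + h t)" and fh2: "L2p_on S (\<lambda>t. f t - h t)"
    using f h by (auto intro: L2p_add L2p_diff)
  have s1: "(\<lambda>i. (ip S f (e i) + ip S h (e i))\<^sup>2) sums ip S (\<lambda>t. f t + h t) (\<lambda>t. f t + h t)"
    using pars[OF fh1] by (simp add: ip_add_left[OF f h e])
  have s2: "(\<lambda>i. (ip S f (e i) - ip S h (e i))\<^sup>2) sums ip S (\<lambda>t. f t - h t) (\<lambda>t. f t - h t)"
    using pars[OF fh2] by (simp add: ip_diff_left[OF f h e])
  have a1: "ip S (\<lambda>t. f t + h t) (\<lambda>t. f t + h t) = ip S f (\<lambda>t. f t + h t) + ip S h (\<lambda>t. f t + h t)"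
    by (rule ip_add_left[OF f h fh1])
  have a2: "ip S f (\<lambda>t. f t + h t) = ip S f f + ip S h f"
    using ip_sym[of S f "\<lambda>t. f t + h t"] ip_add_left[OF f h f] by (rule trans)
  have a3: "ip S h (\<lambda>t. f t + h t) = ip S f h + ip S h h"
    using ip_sym[of S h "\<lambda>t. f t + h t"] ip_add_left[OF f h h] by (rule trans)
  have b1: "ip S (\<lambda>t. f t - h t) (\<lambda>t. f t - h t) = ip S f (\<lambda>t. f t - h t) - ip S h (\<lambda>t. f t - h t)"
    by (rule ip_diff_left[OF f h fh2])
  have b2: "ip S f (\<lambda>t. f t - h t) = ip S f f - ip S h f"
    using ip_sym[of S f "\<lambda>t. f t - h t"] ip_diff_left[OF f h f] by (rule trans)
  have b3: "ip S h (\<lambda>t. f t - h t) = ip S f h - ip S h h"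
    using ip_sym[of S h "\<lambda>t. f t - h t"] ip_diff_left[OF f h h] by (rule trans)
  have c: "ip S h f = ip S f h" by (rule ip_sym)
  have "ip S (\<lambda>t. f t + h t) (\<lambda>t. f t + h t) - ip S (\<lambda>t. f t - h t) (\<lambda>t. f t - h t) = 4 * ip S f h"
    unfolding a1 a2 a3 b1 b2 b3 c by simp
  moreover have "(\<lambda>i. (ip S f (e i) + ip S h (e i))\<^sup>2 - (ip S f (e i) - ip S h (e i))\<^sup>2) = (\<lambda>i. 4 * (ip S f (e i) * ip S h (e i)))"
    by (simp add: power2_eq_square algebra_simps)
  ultimately have "(\<lambda>i. 4 * (ip S f (e i) * ip S h (e i))) sums (4 * ip S f h)"
    using sums_diff[OF s1 s2] by simp
  from sums_mult[OF this, of "1/4"] show ?thesis by simp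
qed

lemma frob_left:
  fixes X :: "real^'p::finite^'m::finite" and P :: "real^'n::finite^'m" and Y :: "real^'p^'n"
  shows "X \<bullet> (P ** Y) = (transpose P ** X) \<bullet> Y"
proof -
  have "X \<bullet> (P ** Y) = (\<Sum>a\<in>UNIV. \<Sum>j\<in>UNIV. \<Sum>b\<in>UNIV. X$a$j * P$a$b * Y$b$j)"
    by (simp add: inner_vec_def matrix_matrix_mult_def sum_distrib_left ac_simps)
  also have "\<dots> = (\<Sum>a\<in>UNIV. \<Sum>b\<in>UNIV. \<Sum>j\<in>UNIV. X$a$j * P$a$b * Y$b$j)"
    by (rule sum.cong[OF refl], rule sum.swap)
  also have "\<dots> = (\<Sum>b\<in>UNIV. \<Sum>a\<in>UNIV. \<Sum>j\<in>UNIV. X$a$j * P$a$b * Y$b$j)"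
    by (rule sum.swap)
  also have "\<dots> = (\<Sum>b\<in>UNIV. \<Sum>j\<in>UNIV. \<Sum>a\<in>UNIV. X$a$j * P$a$b * Y$b$j)"
    by (rule sum.cong[OF refl], rule sum.swap)
  also have "\<dots> = (transpose P ** X) \<bullet> Y"
    by (simp add: inner_vec_def matrix_matrix_mult_def transpose_def sum_distrib_right sum_distrib_left ac_simps)
  finally show ?thesis .
qed

lemma frob_right:
  fixes X :: "real^'p::finite^'m::finite" and Q :: "real^'p^'n::finite" and Y :: "real^'n^'m"
  shows "X \<bullet> (Y ** Q) = (X ** transpose Q) \<bullet> Y"
proof -
  have "X \<bullet> (Y ** Q) = (\<Sum>a\<in>UNIV. \<Sum>j\<in>UNIV. \<Sum>b\<in>UNIV. X$a$j * Y$a$b * Q$b$j)"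
    by (simp add: inner_vec_def matrix_matrix_mult_def sum_distrib_left ac_simps)
  also have "\<dots> = (\<Sum>a\<in>UNIV. \<Sum>b\<in>UNIV. \<Sum>j\<in>UNIV. X$a$j * Y$a$b * Q$b$j)"
    by (rule sum.cong[OF refl], rule sum.swap)
  also have "\<dots> = (X ** transpose Q) \<bullet> Y"
    by (simp add: inner_vec_def matrix_matrix_mult_def transpose_def sum_distrib_right sum_distrib_left ac_simps)
  finally show ?thesis .
qed

lemma mv_sum: "(M::real^'n::finite^'m::finite) *v (\<Sum>j\<in>J. c j *\<^sub>R x j) = (\<Sum>j\<in>J. c j *\<^sub>R (M *v x j))"
proof (induction J rule: infinite_finite_induct)
  case (insert j F) then show ?case by (simp add: matrix_vector_right_distrib matrix_vector_mult_scaleR)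
qed simp_all

lemma lint_phi_dot_gen:
  fixes \<phi> :: "real \<Rightarrow> real^'m::finite"
  assumes "\<And>a b. set_integrable lborel S (\<lambda>t. \<phi> t $ a * \<phi> t $ b)"
  shows "(LINT t:S|lborel. \<phi> t $ a * (c \<bullet> \<phi> t)) = (gram S \<phi> *v c) $ a"
proof -
  have "(LINT t:S|lborel. \<phi> t $ a * (c \<bullet> \<phi> t)) = (LINT t:S|lborel. (c \<bullet> \<phi> t) * \<phi> t $ a)"
    by (simp add: mult.commute)
  also have "\<dots> = c \<bullet> (\<chi> b. LINT t:S|lborel. \<phi> t $ b * \<phi> t $ a)"
    by (intro lint_dot assms)
  also have "\<dots> = (gram S \<phi> *v c) $ a"
    by (simp add: inner_vec_def matrix_vector_mult_def gram_def mult.commute)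
  finally show ?thesis .
qed




lemma column_mult: "column k (M ** N) = (M::real^'n::finite^'m::finite) *v column k (N::real^'p::finite^'n)"
  by (simp add: column_def matrix_matrix_mult_def matrix_vector_mult_def vec_eq_iff)

context L5 begin

definition "beta i c = (LINT t:Tp (snd c)|lborel. (column (fst c) D \<bullet> \<phi> t) * \<psi> i t $ fst c)"

lemma ip_lin: "ip T (\<lambda>t. transpose N *v \<phi> t) (\<psi> i) = N \<bullet> U i"
proof -
  have "ip T (\<lambda>t. transpose N *v \<phi> t) (\<psi> i) = (\<Sum>j\<in>UNIV. LINT t:T|lborel. (column j N \<bullet> \<phi> t) * \<psi> i t $ j)"
    unfolding ip_def by (intro sum.cong refl) (simp only: transpose_mv_comp)
  also have "\<dots> = (\<Sum>j\<in>UNIV. column j N \<bullet> u i j)"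
    unfolding u_def by (intro sum.cong refl lint_dot int_phipsi)
  also have "\<dots> = N \<bullet> U i"
    unfolding U_def using frob[of N "\<lambda>a j. u i j $ a"] by simp
  finally show ?thesis .
qed

lemma ind_sum: "(\<Sum>b\<in>B. indicator (Tp b) t) = (if \<exists>b\<in>B. t \<in> Tp b then 1 else (0::real))"
proof (cases "\<exists>b\<in>B. t \<in> Tp b")
  case True
  then obtain b0 where b0: "b0 \<in> B" "t \<in> Tp b0" by blast
  have "(\<Sum>b\<in>B. indicator (Tp b) t) = (\<Sum>b\<in>B. if b = b0 then 1 else (0::real))"
  proof (intro sum.cong refl)
    fix b assume "b \<in> B"
    show "indicator (Tp b) t = (if b = b0 then 1 else (0::real))"
      using part_disj[of b b0] b0 by (auto simp: indicator_def)
  qed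
  also have "\<dots> = 1" using b0 by simp
  finally show ?thesis using True by simp
next
  case False
  thus ?thesis by (auto simp: indicator_def intro!: sum.neutral)
qed

lemma int_ind:
  assumes "set_integrable lborel T (f::real \<Rightarrow> real)"
  shows "set_integrable lborel T (\<lambda>t. indicator (Tp b) t * f t)"
    and "(LINT t:T|lborel. indicator (Tp b) t * f t) = (LINT t:Tp b|lborel. f t)"
proof -
  have e: "indicator T t * (indicator (Tp b) t * f t) = indicator (Tp b) t * f t" for t
    using Tp_sub[of b] by (auto simp: indicator_def)
  have "integrable lborel (\<lambda>t. indicator (Tp b) t *\<^sub>R (indicator T t *\<^sub>R f t))"
    using assms unfolding set_integrable_def by (intro integrable_mult_indicator[OF Tp_sets])
  moreover have "(\<lambda>t. indicator (Tp b) t *\<^sub>R (indicator T t *\<^sub>R f t)) = (\<lambda>t. indicator T t *\<^sub>R (indicator (Tp b) t * f t))"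
    using e by (auto simp: indicator_def)
  ultimately show "set_integrable lborel T (\<lambda>t. indicator (Tp b) t * f t)"
    unfolding set_integrable_def by simp
  show "(LINT t:T|lborel. indicator (Tp b) t * f t) = (LINT t:Tp b|lborel. f t)"
    unfolding set_lebesgue_integral_def
    by (rule arg_cong[where f="integral\<^sup>L lborel"]) (use Tp_sub[of b] in \<open>auto simp: indicator_def fun_eq_iff\<close>)
qed

lemma masked_comp:
  "(masked Tp (\<lambda>t. transpose A *v \<phi> t) (\<lambda>t. transpose MA *v \<phi> t) Q t - transpose MA *v \<phi> t) $ j
    = (\<Sum>b\<in>{b. (j, b) \<in> Q}. indicator (Tp b) t) * (column j D \<bullet> \<phi> t)"
proof -
  have "(transpose A *v \<phi> t) $ j - (transpose MA *v \<phi> t) $ j = column j D \<bullet> \<phi> t"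
    unfolding D_def by (simp only: transpose_mv_comp column_diff inner_diff_left)
  thus ?thesis unfolding masked_def ind_sum by auto
qed

lemma masked_ip:
  "ip T (\<lambda>t. masked Tp (\<lambda>t. transpose A *v \<phi> t) (\<lambda>t. transpose MA *v \<phi> t) Q t - transpose MA *v \<phi> t) (\<psi> i)
    = (\<Sum>c\<in>Q. beta i c)"
proof -
  have "ip T (\<lambda>t. masked Tp (\<lambda>t. transpose A *v \<phi> t) (\<lambda>t. transpose MA *v \<phi> t) Q t - transpose MA *v \<phi> t) (\<psi> i)
      = (\<Sum>j\<in>UNIV. LINT t:T|lborel. (\<Sum>b\<in>{b. (j, b) \<in> Q}. indicator (Tp b) t * ((column j D \<bullet> \<phi> t) * \<psi> i t $ j)))"
    unfolding ip_def masked_comp by (simp add: sum_distrib_right mult.assoc)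
  also have "\<dots> = (\<Sum>j\<in>UNIV. \<Sum>b\<in>{b. (j, b) \<in> Q}. beta i (j, b))"
  proof (intro sum.cong refl)
    fix j
    show "(LINT t:T|lborel. (\<Sum>b\<in>{b. (j, b) \<in> Q}. indicator (Tp b) t * ((column j D \<bullet> \<phi> t) * \<psi> i t $ j)))
        = (\<Sum>b\<in>{b. (j, b) \<in> Q}. beta i (j, b))"
      by (subst sint_sum) (simp_all add: int_ind[OF int_dotpsi] beta_def)
  qed
  also have "\<dots> = (\<Sum>(j, b)\<in>Sigma UNIV (\<lambda>j. {b. (j, b) \<in> Q}). beta i (j, b))"
    by (rule sum.Sigma) auto
  also have "Sigma UNIV (\<lambda>j. {b. (j, b) \<in> Q}) = Q" by auto
  finally show ?thesis by (simp add: case_prod_beta')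
qed

lemma ip_cong_T: "(\<And>t. t \<in> T \<Longrightarrow> x t = y t) \<Longrightarrow> ip T x z = ip T y z"
  unfolding ip_def by (intro sum.cong refl set_lebesgue_integral_cong) auto

lemma sum_beta: "(\<Sum>c\<in>UNIV. beta i c) = D \<bullet> U i"
proof -
  have "(\<Sum>c\<in>UNIV. beta i c) = ip T (\<lambda>t. masked Tp (\<lambda>t. transpose A *v \<phi> t) (\<lambda>t. transpose MA *v \<phi> t) UNIV t - transpose MA *v \<phi> t) (\<psi> i)"
    by (rule masked_ip[symmetric])
  also have "\<dots> = ip T (\<lambda>t. transpose A *v \<phi> t - transpose MA *v \<phi> t) (\<psi> i)"
  proof (rule ip_cong_T)
    fix t assume "t \<in> T"
    then obtain b where "t \<in> Tp b" using part_cover by blast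
    thus "masked Tp (\<lambda>t. transpose A *v \<phi> t) (\<lambda>t. transpose MA *v \<phi> t) UNIV t - transpose MA *v \<phi> t
        = transpose A *v \<phi> t - transpose MA *v \<phi> t"
      unfolding masked_def by (auto simp: vec_eq_iff)
  qed
  also have "\<dots> = D \<bullet> U i" by (rule ip_X)
  finally show ?thesis .
qed

lemma shapley_val:
  "shapley (\<lambda>Q. fMMD2 T \<psi> \<pi> N (masked Tp (\<lambda>t. transpose A *v \<phi> t) (\<lambda>t. transpose MA *v \<phi> t) Q) (\<lambda>t. transpose MA *v \<phi> t)) c
    = (\<Sum>i<N. (1 / \<pi> i) * (beta i c * (D \<bullet> U i)))"
proof -
  have eq: "(\<lambda>Q. fMMD2 T \<psi> \<pi> N (masked Tp (\<lambda>t. transpose A *v \<phi> t) (\<lambda>t. transpose MA *v \<phi> t) Q) (\<lambda>t. transpose MA *v \<phi> t))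
      = (\<lambda>Q. \<Sum>i<N. (1 / \<pi> i) * (\<Sum>x\<in>Q. beta i x)\<^sup>2)"
    unfolding fMMD2_def masked_ip by simp
  have "shapley (\<lambda>Q. fMMD2 T \<psi> \<pi> N (masked Tp (\<lambda>t. transpose A *v \<phi> t) (\<lambda>t. transpose MA *v \<phi> t) Q) (\<lambda>t. transpose MA *v \<phi> t)) c
      = shapley (\<lambda>Q. \<Sum>i<N. (1 / \<pi> i) * (\<Sum>x\<in>Q. beta i x)\<^sup>2) c"
    by (simp only: eq)
  also have "\<dots> = (\<Sum>i<N. shapley (\<lambda>Q. (1 / \<pi> i) * (\<Sum>x\<in>Q. beta i x)\<^sup>2) c)"
    by (rule shapley_sum)
  also have "\<dots> = (\<Sum>i<N. (1 / \<pi> i) * shapley (\<lambda>Q. (\<Sum>x\<in>Q. beta i x)\<^sup>2) c)"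
    by (simp only: shapley_scale)
  also have "\<dots> = (\<Sum>i<N. (1 / \<pi> i) * (beta i c * (D \<bullet> U i)))"
    by (simp only: shapley_quad sum_beta)
  finally show ?thesis .
qed

end



context L5 begin

definition "R = (\<chi> a b. \<Sum>j\<in>UNIV. v j $ a * v j $ b / lam j)"
definition "E = matrix_inv (gram T \<phi>) ** matrix_inv Scol ** D ** R"

lemma lam_pos: "0 < lam j"
proof -
  have vv: "v j \<bullet> v j = 1" using v_orth[of j j] by simp
  hence "v j \<noteq> 0" by auto
  hence "0 < v j \<bullet> (Srow *v v j)" using Srow_pd unfolding pos_def_def by blast
  also have "v j \<bullet> (Srow *v v j) = lam j" using vv by (simp add: v_eig)
  finally show ?thesis .
qed

lemma R_Srow: "R ** Srow = mat 1"
proof -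
  define V where "V = (\<chi> a j. v j $ a)"
  have "transpose V ** V = mat 1"
    by (simp add: V_def matrix_matrix_mult_def transpose_def mat_def vec_eq_iff v_orth[unfolded inner_vec_def, simplified] mult.commute)
  hence VV: "V ** transpose V = mat 1" using matrix_left_right_inverse by blast
  have "(R ** Srow) $ a $ b = mat 1 $ a $ b" for a b
  proof -
    have "(R ** Srow) $ a $ b = (\<Sum>c\<in>UNIV. (\<Sum>j\<in>UNIV. v j $ a * v j $ c / lam j) * Srow $ c $ b)"
      by (simp add: matrix_matrix_mult_def R_def)
    also have "\<dots> = (\<Sum>c\<in>UNIV. \<Sum>j\<in>UNIV. (v j $ a / lam j) * (Srow $ b $ c * v j $ c))"
      by (intro sum.cong refl) (simp add: sum_distrib_right sum_distrib_left sym_entry[OF Srow_sym, of c b for c] ac_simps)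
    also have "\<dots> = (\<Sum>j\<in>UNIV. \<Sum>c\<in>UNIV. (v j $ a / lam j) * (Srow $ b $ c * v j $ c))"
      by (rule sum.swap)
    also have "\<dots> = (\<Sum>j\<in>UNIV. (v j $ a / lam j) * (Srow *v v j) $ b)"
      by (simp add: matrix_vector_mult_def sum_distrib_left)
    also have "\<dots> = (\<Sum>j\<in>UNIV. v j $ a * v j $ b)"
      using lam_pos by (intro sum.cong refl) (simp add: v_eig less_imp_neq[symmetric])
    also have "\<dots> = (V ** transpose V) $ a $ b"
      by (simp add: V_def matrix_matrix_mult_def transpose_def)
    finally show ?thesis using VV by simp
  qed
  thus ?thesis by (simp add: vec_eq_iff)
qed

lemma Scol_inv: "invertible Scol"
  using pd_inverse[OF Scol_pd] unfolding invertible_def by blast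

lemma W_sym: "transpose (gram T \<phi>) = gram T \<phi>"
  by (simp add: transpose_def gram_def vec_eq_iff mult.commute)

lemma SWES: "Scol ** gram T \<phi> ** E ** Srow = D"
proof -
  have "Scol ** gram T \<phi> ** E ** Srow
      = ((Scol ** (gram T \<phi> ** matrix_inv (gram T \<phi>))) ** matrix_inv Scol) ** D ** (R ** Srow)"
    by (simp add: E_def matrix_mul_assoc)
  also have "\<dots> = D"
    by (simp add: inv_props[OF W_invertible] inv_props[OF Scol_inv] R_Srow)
  finally show ?thesis .
qed

lemma DU: "D \<bullet> U i = \<pi> i * (E \<bullet> U i)"
proof -
  have "\<pi> i * (E \<bullet> U i) = E \<bullet> (\<pi> i *\<^sub>R U i)" by simp
  also have "\<dots> = E \<bullet> (gram T \<phi> ** (Scol ** (U i ** Srow)))" by (simp add: piU H_def matrix_mul_assoc)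
  also have "\<dots> = (transpose (gram T \<phi>) ** E) \<bullet> (Scol ** (U i ** Srow))" by (rule frob_left)
  also have "\<dots> = (transpose Scol ** (transpose (gram T \<phi>) ** E)) \<bullet> (U i ** Srow)" by (rule frob_left)
  also have "\<dots> = ((transpose Scol ** (transpose (gram T \<phi>) ** E)) ** transpose Srow) \<bullet> U i" by (rule frob_right)
  also have "\<dots> = (Scol ** gram T \<phi> ** E ** Srow) \<bullet> U i" by (simp add: W_sym Scol_sym Srow_sym matrix_mul_assoc)
  also have "\<dots> = D \<bullet> U i" by (simp add: SWES)
  finally show ?thesis by simp
qed

lemma term_eq: "(1 / \<pi> i) * (beta i c * (D \<bullet> U i)) = beta i c * (E \<bullet> U i)"
proof (cases "\<pi> i = 0")
  case True thus ?thesis using pi0 by simp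
next
  case False thus ?thesis by (simp add: DU)
qed

definition "ff k a = (\<lambda>t. \<chi> j. if j = k then indicator (Tp a) t * (column k D \<bullet> \<phi> t) else (0::real))"
definition "hh = (\<lambda>t. transpose E *v \<phi> t)"

lemma ff_L2: "L2p_on T (ff k a)"
  unfolding L2p_on_def
proof
  fix j
  show "L2_on T (\<lambda>t. ff k a t $ j)"
  proof (cases "j = k")
    case True thus ?thesis unfolding ff_def by (simp add: L2_ind[OF dotL2 Tp_sets])
  next
    case False thus ?thesis unfolding ff_def by (simp add: L2_zero)
  qed
qed

lemma hh_L2: "L2p_on T hh"
  unfolding L2p_on_def hh_def transpose_mv_comp by (simp add: dotL2)

lemma ip_ff: "ip T (ff k a) (\<psi> i) = beta i (k, a)"
proof -
  have "ip T (ff k a) (\<psi> i) = (\<Sum>j\<in>UNIV. if j = k then (LINT t:T|lborel. indicator (Tp a) t * ((column k D \<bullet> \<phi> t) * \<psi> i t $ k)) else 0)"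
    unfolding ip_def ff_def by (intro sum.cong refl) (auto simp: mult.assoc)
  also have "\<dots> = (LINT t:T|lborel. indicator (Tp a) t * ((column k D \<bullet> \<phi> t) * \<psi> i t $ k))" by simp
  also have "\<dots> = beta i (k, a)" unfolding beta_def by (simp add: int_ind[OF int_dotpsi])
  finally show ?thesis .
qed

lemma ip_hh: "ip T hh (\<psi> i) = E \<bullet> U i"
  unfolding hh_def by (rule ip_lin)

lemma ip_ff_hh: "ip T (ff k a) hh = column k D \<bullet> (gram (Tp a) \<phi> *v column k E)"
proof -
  have "ip T (ff k a) hh = (\<Sum>j\<in>UNIV. if j = k then (LINT t:T|lborel. indicator (Tp a) t * ((column k D \<bullet> \<phi> t) * (column k E \<bullet> \<phi> t))) else 0)"
    unfolding ip_def ff_def hh_def by (intro sum.cong refl) (auto simp: mult.assoc transpose_mv_comp vm_comp)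
  also have "\<dots> = (LINT t:T|lborel. indicator (Tp a) t * ((column k D \<bullet> \<phi> t) * (column k E \<bullet> \<phi> t)))" by simp
  also have "\<dots> = (LINT t:Tp a|lborel. (column k D \<bullet> \<phi> t) * (column k E \<bullet> \<phi> t))"
    by (rule int_ind(2)[OF L2_prod[OF dotL2 dotL2]])
  also have "\<dots> = column k D \<bullet> (\<chi> b. LINT t:Tp a|lborel. \<phi> t $ b * (column k E \<bullet> \<phi> t))"
    by (intro lint_dot int_sub L2_prod[OF phi_L2 dotL2])
  also have "(\<chi> b. LINT t:Tp a|lborel. \<phi> t $ b * (column k E \<bullet> \<phi> t)) = gram (Tp a) \<phi> *v column k E"
    by (simp add: vec_eq_iff lint_phi_dot_gen[OF int_sub[OF int_phiphi]])
  finally show ?thesis .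
qed

lemma main_sum: "(\<Sum>i<CARD('m) * CARD('p). beta i (k, a) * (E \<bullet> U i)) = column k D \<bullet> (gram (Tp a) \<phi> *v column k E)"
proof -
  have s1: "(\<lambda>i. beta i (k, a) * (E \<bullet> U i)) sums ip T (ff k a) hh"
    using polar[OF ff_L2 hh_L2 psi_L2 psi_complete] by (simp add: ip_ff ip_hh)
  have s2: "(\<lambda>i. beta i (k, a) * (E \<bullet> U i)) sums (\<Sum>i<CARD('m) * CARD('p). beta i (k, a) * (E \<bullet> U i))"
  proof (rule sums_finite)
    fix n assume "n \<notin> {..<CARD('m) * CARD('p)}"
    hence "U n = 0" using pi0 pi_zero by simp
    thus "beta n (k, a) * (E \<bullet> U n) = 0" by simp
  qed simp
  show ?thesis using sums_unique2[OF s2 s1] ip_ff_hh by simp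
qed

lemma colE: "column k E = matrix_inv (gram T \<phi>) *v (matrix_inv Scol *v (D *v (\<Sum>j\<in>UNIV. (v j $ k / lam j) *\<^sub>R v j)))"
proof -
  have "column k R = (\<Sum>j\<in>UNIV. (v j $ k / lam j) *\<^sub>R v j)"
    by (simp add: column_def R_def vec_eq_iff sum_component mult.commute)
  thus ?thesis unfolding E_def by (simp add: column_mult matrix_vector_mul_assoc matrix_mul_assoc)
qed

theorem main:
  "shapley (\<lambda>Q. fMMD2 T \<psi> \<pi> (CARD('m) * CARD('p)) (masked Tp (\<lambda>t. transpose A *v \<phi> t) (\<lambda>t. transpose MA *v \<phi> t) Q) (\<lambda>t. transpose MA *v \<phi> t)) (k, a)
   = (\<Sum>j\<in>UNIV. (1 / lam j) * (v j $ k) *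
       (column k D \<bullet> ((gram (Tp a) \<phi> ** matrix_inv (gram T \<phi>) ** matrix_inv Scol) *v (D *v v j))))"
proof -
  let ?P = "gram (Tp a) \<phi> ** matrix_inv (gram T \<phi>) ** matrix_inv Scol"
  have "shapley (\<lambda>Q. fMMD2 T \<psi> \<pi> (CARD('m) * CARD('p)) (masked Tp (\<lambda>t. transpose A *v \<phi> t) (\<lambda>t. transpose MA *v \<phi> t) Q) (\<lambda>t. transpose MA *v \<phi> t)) (k, a)
      = (\<Sum>i<CARD('m) * CARD('p). beta i (k, a) * (E \<bullet> U i))"
    unfolding shapley_val term_eq ..
  also have "\<dots> = column k D \<bullet> (gram (Tp a) \<phi> *v column k E)" by (rule main_sum)
  also have "gram (Tp a) \<phi> *v column k E = ?P *v (D *v (\<Sum>j\<in>UNIV. (v j $ k / lam j) *\<^sub>R v j))"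
    unfolding colE by (simp add: matrix_vector_mul_assoc matrix_mul_assoc)
  also have "\<dots> = (\<Sum>j\<in>UNIV. (v j $ k / lam j) *\<^sub>R (?P *v (D *v v j)))"
    by (simp add: mv_sum)
  also have "column k D \<bullet> \<dots> = (\<Sum>j\<in>UNIV. (1 / lam j) * (v j $ k) * (column k D \<bullet> (?P *v (D *v v j))))"
    by (simp add: inner_sum_right)
  finally show ?thesis .
qed

end


theorem lemma5:
  fixes lo hi :: real
    and Tp :: "'d::finite \<Rightarrow> real set"
    and \<phi> :: "real \<Rightarrow> real ^ 'm::finite"
    and A MA :: "real ^ 'p::finite ^ 'm"
    and Srow :: "real ^ 'p ^ 'p"
    and Scol :: "real ^ 'm ^ 'm"
    and \<psi> :: "nat \<Rightarrow> real \<Rightarrow> real ^ 'p"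
    and \<pi> :: "nat \<Rightarrow> real"
    and lam :: "'p \<Rightarrow> real"
    and v :: "'p \<Rightarrow> real ^ 'p"
    and k :: 'p and a :: 'd
  defines "T \<equiv> {lo..hi}"
    and "W \<equiv> gram {lo..hi} \<phi>"
    and "X \<equiv> (\<lambda>t. transpose A *v \<phi> t)"
    and "\<mu> \<equiv> (\<lambda>t. transpose MA *v \<phi> t)"
    and "K \<equiv> (\<lambda>s t. (\<phi> s \<bullet> (Scol *v \<phi> t)) *\<^sub>R Srow)"
    and "M \<equiv> CARD('m) * CARD('p)"
  assumes part_int: "\<And>b. is_interval (Tp b)"
    and part_disj: "\<And>b b'. b \<noteq> b' \<Longrightarrow> Tp b \<inter> Tp b' = {}"
    and part_cover: "(\<Union>b. Tp b) = T"
    and phi_L2: "\<And>i. L2_on T (\<lambda>t. \<phi> t $ i)"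
    and phi_indep: "\<And>c. (AE t in lborel. t \<in> T \<longrightarrow> c \<bullet> \<phi> t = 0) \<Longrightarrow> c = 0"
    and Srow_pd: "pos_def Srow"
    and Scol_pd: "pos_def Scol"
    and psi_L2: "\<And>i. L2p_on T (\<psi> i)"
    and psi_orth: "\<And>i j. ip T (\<psi> i) (\<psi> j) = (if i = j then 1 else 0)"
    and psi_eig: "\<And>i. AE t in lborel. t \<in> T \<longrightarrow> cov_op T K (\<psi> i) t = \<pi> i *\<^sub>R \<psi> i t"
    and pi_noninc: "decseq \<pi>"
    and psi_complete: "\<And>x. L2p_on T x \<Longrightarrow> (\<lambda>i. (ip T x (\<psi> i))\<^sup>2) sums ip T x x"
    and v_eig: "\<And>j. Srow *v v j = lam j *\<^sub>R v j"
    and v_orth: "\<And>i j. v i \<bullet> v j = (if i = j then 1 else 0)"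
  shows "shapley (\<lambda>Q. fMMD2 T \<psi> \<pi> M (masked Tp X \<mu> Q) \<mu>) (k, a) =
    (\<Sum>j\<in>UNIV. (1 / lam j) * (v j $ k) *
       (column k (A - MA) \<bullet>
         ((gram (Tp a) \<phi> ** matrix_inv W ** matrix_inv Scol) *v ((A - MA) *v v j))))"
proof -
  have pc: "(\<Union>b. Tp b) = {lo..hi}" using part_cover unfolding assms(1) .
  have pl: "\<And>i. L2_on {lo..hi} (\<lambda>t. \<phi> t $ i)" using phi_L2 unfolding assms(1) .
  have pin: "\<And>c. (AE t in lborel. t \<in> {lo..hi} \<longrightarrow> c \<bullet> \<phi> t = 0) \<Longrightarrow> c = 0"
    using phi_indep unfolding assms(1) .
  have psl: "\<And>i. L2p_on {lo..hi} (\<psi> i)" using psi_L2 unfolding assms(1) .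
  have pso: "\<And>i j. ip {lo..hi} (\<psi> i) (\<psi> j) = (if i = j then 1 else 0)" using psi_orth unfolding assms(1) .
  have pse: "\<And>i. AE t in lborel. t \<in> {lo..hi} \<longrightarrow>
        cov_op {lo..hi} (\<lambda>s t. (\<phi> s \<bullet> (Scol *v \<phi> t)) *\<^sub>R Srow) (\<psi> i) t = \<pi> i *\<^sub>R \<psi> i t"
    using psi_eig unfolding assms(1) assms(5) .
  have psc: "\<And>x. L2p_on {lo..hi} x \<Longrightarrow> (\<lambda>i. (ip {lo..hi} x (\<psi> i))\<^sup>2) sums ip {lo..hi} x x"
    using psi_complete unfolding assms(1) .
  interpret L: L5 lo hi Tp \<phi> A MA Srow Scol \<psi> \<pi> lam v
    by (rule L5.intro[OF part_int part_disj pc pl pin Srow_pd Scol_pd psl pso pse pi_noninc psc v_eig v_orth])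
  show ?thesis
    using L.main[of k a] unfolding L.D_def assms(1) assms(2) assms(3) assms(4) assms(6) .
qed

end
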